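(* The three-dimensional closed convex cone $\mathcal{P}^{s+}_{4,3}$ is a polyhedral cone with exactly four extremal rays, generated respectively by $g_1=T^4_{2,1}-3S^4_{1,1,1}$, $g_2=3S^4_3+3S^4_{1,1,1}-2T^4_{2,1}$, $g_3=S^4_{1,1,1}$, $g_4=S^4_3+3S^4_{1,1,1}-T^4_{2,1}$. Moreover each $g_i$ is characterized in $\mathcal{P}^{s+}_{4,3}$ by equality conditions: if $f\in\mathcal{P}^{s+}_{4,3}$ satisfies $f(1,0,0,0)=f(1,1,1,1)=0$ then $f\in\mathbb{R}_{\ge0}g_1$; $f(1,1,1,0)=f(1,1,1,1)=0$ then $f\in\mathbb{R}_{\ge0}g_2$; $f(1,0,0,0)=f(1,1,0,0)=0$ then $f\in\mathbb{R}_{\ge0}g_3$; $f(1,1,0,0)=f(1,1,1,0)=0$ then $f\in\mathbb{R}_{\ge0}g_4$.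
   Context: Variables $x_1,x_2,x_3,x_4$ (also written $a,b,c,d$). $S^4_3=\sum_{i=1}^4x_i^3$, $T^4_{2,1}=\sum_{i=1}^4x_i^2\sum_{j\ne i}x_j$, $S^4_{1,1,1}=bcd+acd+abd+abc$. $\mathcal{H}^s_{4,3}$ is the real vector space of symmetric homogeneous cubic forms in $\mathbb{R}[a,b,c,d]$ and $\mathcal{P}^{s+}_{4,3}=\{f\in\mathcal{H}^s_{4,3}: f(x)\ge0 \text{ for all } x\in\mathbb{R}_{\ge0}^4\}$. For a closed convex cone $\mathcal{P}$, $f\in\mathcal{P}\setminus\{0\}$ is extremal (generates an extremal ray) if $f=g+h$ with $g,h\in\mathcal{P}$ forces $g,h\in\mathbb{R}_{\ge0}f$. *)

theory Defs
  imports "HOL-Analysis.Analysis" "HOL-Library.Numeral_Type"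
begin

text \<open>Points of R^4 are vectors of type real^4; coordinates x$0,x$1,x$2,x$3 are a,b,c,d.
  Forms are identified with the polynomial functions they define (R is infinite).\<close>

type_synonym form4 = "real^4 \<Rightarrow> real"

definition S3 :: form4 where
  "S3 x = (\<Sum>i\<in>UNIV. (x$i)^3)"

definition T21 :: form4 where
  "T21 x = (\<Sum>i\<in>UNIV. (x$i)^2 * (\<Sum>j\<in>UNIV-{i}. x$j))"

definition S111 :: form4 where
  "S111 x = (\<Sum>i\<in>UNIV. \<Prod>j\<in>UNIV-{i}. x$j)"

definition cubic_form4 :: "form4 \<Rightarrow> bool" where
  "cubic_form4 f \<longleftrightarrow> (\<exists>c :: 4 \<Rightarrow> 4 \<Rightarrow> 4 \<Rightarrow> real.
      \<forall>x. f x = (\<Sum>i\<in>UNIV. \<Sum>j\<in>UNIV. \<Sum>k\<in>UNIV. c i j k * x$i * x$j * x$k))"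

definition Hs43 :: "form4 set" where
  "Hs43 = {f. cubic_form4 f \<and> (\<forall>\<sigma> x. \<sigma> permutes (UNIV::4 set) \<longrightarrow> f (\<chi> i. x $ \<sigma> i) = f x)}"

definition Ps43 :: "form4 set" where
  "Ps43 = {f \<in> Hs43. \<forall>x. (\<forall>i. 0 \<le> x$i) \<longrightarrow> 0 \<le> f x}"

definition ray :: "form4 \<Rightarrow> form4 set" where
  "ray f = {(\<lambda>x. t * f x) | t. t \<ge> 0}"

definition extremal_in :: "form4 set \<Rightarrow> form4 \<Rightarrow> bool" where
  "extremal_in P f \<longleftrightarrow> f \<in> P \<and> f \<noteq> (\<lambda>x. 0) \<and>
     (\<forall>g h. g \<in> P \<longrightarrow> h \<in> P \<longrightarrow> f = (\<lambda>x. g x + h x) \<longrightarrow> g \<in> ray f \<and> h \<in> ray f)"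

definition g1 :: form4 where "g1 x = T21 x - 3 * S111 x"
definition g2 :: form4 where "g2 x = 3 * S3 x + 3 * S111 x - 2 * T21 x"
definition g3 :: form4 where "g3 x = S111 x"
definition g4 :: form4 where "g4 x = S3 x + 3 * S111 x - T21 x"

definition gen :: "nat \<Rightarrow> form4" where
  "gen i = (if i = 1 then g1 else if i = 2 then g2 else if i = 3 then g3 else g4)"

end

theory Submission
  imports Defs
begin

lemma v4: "(vector [a,b,c,d] :: real^4) $ 1 = a" "(vector [a,b,c,d] :: real^4) $ 2 = b"
 "(vector [a,b,c,d] :: real^4) $ 3 = c" "(vector [a,b,c,d] :: real^4) $ 4 = d"
  unfolding vector_def by simp_all

lemma neq4: "(1::4) \<noteq> 2" "(1::4) \<noteq> 3" "(1::4) \<noteq> 4" "(2::4) \<noteq> 3" "(2::4) \<noteq> 4" "(3::4) \<noteq> 4"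
  by simp_all

lemma diff4: "UNIV - {1::4} = {2,3,4}" "UNIV - {2::4} = {1,3,4}" "UNIV - {3::4} = {1,2,4}" "UNIV - {4::4} = {1,2,3}"
  using exhaust_4 neq4 neq4[symmetric] by blast+

lemma S3_eq: "S3 x = (x$1)^3 + (x$2)^3 + (x$3)^3 + (x$4)^3"
  by (simp add: S3_def sum_4)
lemma T21_eq: "T21 x = (x$1)^2*(x$2+x$3+x$4) + (x$2)^2*(x$1+x$3+x$4) + (x$3)^2*(x$1+x$2+x$4) + (x$4)^2*(x$1+x$2+x$3)"
  by (simp add: T21_def sum_4 diff4 algebra_simps)
lemma S111_eq: "S111 x = x$2*x$3*x$4 + x$1*x$3*x$4 + x$1*x$2*x$4 + x$1*x$2*x$3"
  by (simp add: S111_def sum_4 diff4 algebra_simps)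

lemma vec_is_vector4: "(x::real^4) = vector [x$1,x$2,x$3,x$4]"
  by (simp add: vec_eq_iff forall_4 v4)

definition symc :: "real \<Rightarrow> real \<Rightarrow> real \<Rightarrow> form4" where
  "symc \<alpha> \<beta> \<gamma> x = \<alpha> * S3 x + \<beta> * T21 x + \<gamma> * S111 x"

lemma swap_perm:
  assumes f: "f \<in> Hs43" and s: "\<forall>i. (vector [a',b',c',d'] :: real^4) $ i = vector [a,b,c,d] $ (Transposition.transpose p q i)"
  shows "f (vector [a,b,c,d]) = f (vector [a',b',c',d'])"
proof -
  have "Transposition.transpose p q permutes (UNIV::4 set)" by (rule permutes_swap_id) auto
  with f have "f (\<chi> i. (vector [a,b,c,d] :: real^4) $ Transposition.transpose p q i) = f (vector [a,b,c,d])"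
    unfolding Hs43_def by blast
  moreover have "(\<chi> i. (vector [a,b,c,d] :: real^4) $ Transposition.transpose p q i) = vector [a',b',c',d']"
    using s by (simp add: vec_eq_iff)
  ultimately show ?thesis by simp
qed

lemma sw12: "f \<in> Hs43 \<Longrightarrow> f (vector [a,b,c,d]) = f (vector [b,a,c,d])"
  by (rule swap_perm[where p=1 and q=2]) (simp_all add: forall_4 v4 neq4 neq4[symmetric] Transposition.transpose_def)
lemma sw23: "f \<in> Hs43 \<Longrightarrow> f (vector [a,b,c,d]) = f (vector [a,c,b,d])"
  by (rule swap_perm[where p=2 and q=3]) (simp_all add: forall_4 v4 neq4 neq4[symmetric] Transposition.transpose_def)
lemma sw34: "f \<in> Hs43 \<Longrightarrow> f (vector [a,b,c,d]) = f (vector [a,b,d,c])"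
  by (rule swap_perm[where p=3 and q=4]) (simp_all add: forall_4 v4 neq4 neq4[symmetric] Transposition.transpose_def)


definition PS3 :: "real \<Rightarrow> real \<Rightarrow> real \<Rightarrow> real \<Rightarrow> real" where
  "PS3 a b c d = a^3 + b^3 + c^3 + d^3"
definition PT :: "real \<Rightarrow> real \<Rightarrow> real \<Rightarrow> real \<Rightarrow> real" where
  "PT a b c d = a^2*(b+c+d) + b^2*(a+c+d) + c^2*(a+b+d) + d^2*(a+b+c)"
definition PE :: "real \<Rightarrow> real \<Rightarrow> real \<Rightarrow> real \<Rightarrow> real" where
  "PE a b c d = b*c*d + a*c*d + a*b*d + a*b*c"

lemma symc_P: "symc \<alpha> \<beta> \<gamma> x = \<alpha> * PS3 (x$1) (x$2) (x$3) (x$4) + \<beta> * PT (x$1) (x$2) (x$3) (x$4) + \<gamma> * PE (x$1) (x$2) (x$3) (x$4)"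
  by (simp add: symc_def S3_eq T21_eq S111_eq PS3_def PT_def PE_def)

lemma sym_wlog:
  fixes P :: "real \<Rightarrow> real \<Rightarrow> real \<Rightarrow> real \<Rightarrow> bool"
  assumes s12: "\<And>a b c d. P a b c d \<Longrightarrow> P b a c d"
    and s23: "\<And>a b c d. P a b c d \<Longrightarrow> P a c b d"
    and s34: "\<And>a b c d. P a b c d \<Longrightarrow> P a b d c"
    and ord: "\<And>a b c d. d \<le> c \<Longrightarrow> c \<le> b \<Longrightarrow> b \<le> a \<Longrightarrow> P a b c d"
  shows "P a b c d"
proof -
  have L1: "P a b c d" if "c \<le> b" "b \<le> a" for a b c d
  proof -
    consider "d \<le> c" | "c \<le> d" "d \<le> b" | "b \<le> d" "d \<le> a" | "a \<le> d" by linarith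
    then show ?thesis
    proof cases
      case 1 then show ?thesis using ord that by blast
    next
      case 2 then have "P a b d c" using ord that by blast
      then show ?thesis using s34 by blast
    next
      case 3 then have "P a d b c" using ord that by blast
      then show ?thesis using s34 s23 by blast
    next
      case 4 then have "P d a b c" using ord that by blast
      then show ?thesis using s34 s23 s12 by blast
    qed
  qed
  have L2: "P a b c d" if "b \<le> a" for a b c d
  proof -
    consider "c \<le> b" | "b \<le> c" "c \<le> a" | "a \<le> c" by linarith
    then show ?thesis
    proof cases
      case 1 then show ?thesis using L1 that by blast
    next
      case 2 then have "P a c b d" using L1 that by blast
      then show ?thesis using s23 by blast
    next
      case 3 then have "P c a b d" using L1 that by blast
      then show ?thesis using s23 s12 by blast
    qed
  qed
  show ?thesis
  proof (cases "b \<le> a")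
    case True then show ?thesis using L2 by blast
  next
    case False then have "P b a c d" using L2 by simp
    then show ?thesis using s12 by blast
  qed
qed

lemma G2_ord:
  assumes "0 \<le> s" "0 \<le> u" "0 \<le> y" "0 \<le> z"
  shows "0 \<le> 3 * PS3 (s+u+y+z) (s+u+y) (s+u) s + 3 * PE (s+u+y+z) (s+u+y) (s+u) s - 2 * PT (s+u+y+z) (s+u+y) (s+u) s"
proof -
  have "3 * PS3 (s+u+y+z) (s+u+y) (s+u) s + 3 * PE (s+u+y+z) (s+u+y) (s+u) s - 2 * PT (s+u+y+z) (s+u+y) (s+u) s
    = 3 * z * z * z + 7 * y * z * z + 3 * y * y * z + 2 * y * y * y + 5 * u * z * z + 5 * u * y * z + 5 * u * y * y + 3 * s * z * z + 4 * s * y * z + 4 * s * y * y + 2 * s * u * z + 4 * s * u * y + 3 * s * u * u"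
    by (simp add: PS3_def PE_def PT_def algebra_simps power2_eq_square power3_eq_cube)
  also have "\<dots> \<ge> 0" using assms by (intro add_nonneg_nonneg mult_nonneg_nonneg) simp_all
  finally show ?thesis .
qed

lemma G4_ord:
  assumes "0 \<le> s" "0 \<le> u" "0 \<le> y" "0 \<le> z"
  shows "0 \<le> PS3 (s+u+y+z) (s+u+y) (s+u) s + 3 * PE (s+u+y+z) (s+u+y) (s+u) s - PT (s+u+y+z) (s+u+y) (s+u) s"
proof -
  have "PS3 (s+u+y+z) (s+u+y) (s+u) s + 3 * PE (s+u+y+z) (s+u+y) (s+u) s - PT (s+u+y+z) (s+u+y) (s+u) s
    = 1 * z * z * z + 2 * y * z * z + 1 * u * z * z + 1 * u * y * z + 1 * u * y * y + 2 * s * y * z + 2 * s * y * y + 4 * s * u * z + 8 * s * u * y + 6 * s * u * u + 3 * s * s * z + 6 * s * s * y + 9 * s * s * u + 4 * s * s * s"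
    by (simp add: PS3_def PE_def PT_def algebra_simps power2_eq_square power3_eq_cube)
  also have "\<dots> \<ge> 0" using assms by (intro add_nonneg_nonneg mult_nonneg_nonneg) simp_all
  finally show ?thesis .
qed

lemma G_nonneg:
  assumes nn: "0 \<le> a" "0 \<le> b" "0 \<le> c" "0 \<le> d"
  shows "0 \<le> 3 * PS3 a b c d + 3 * PE a b c d - 2 * PT a b c d"
    and "0 \<le> PS3 a b c d + 3 * PE a b c d - PT a b c d"
proof -
  let ?Q = "\<lambda>a b c d. 0 \<le> a \<longrightarrow> 0 \<le> b \<longrightarrow> 0 \<le> c \<longrightarrow> 0 \<le> d \<longrightarrow>
     0 \<le> 3 * PS3 a b c d + 3 * PE a b c d - 2 * PT a b c d \<and> 0 \<le> PS3 a b c d + 3 * PE a b c d - PT a b c d"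
  have "?Q a b c d"
  proof (rule sym_wlog[where P = ?Q])
    fix a b c d
    assume "?Q a b c d" then show "?Q b a c d" by (simp add: PS3_def PE_def PT_def algebra_simps)
  next
    fix a b c d
    assume "?Q a b c d" then show "?Q a c b d" by (simp add: PS3_def PE_def PT_def algebra_simps)
  next
    fix a b c d
    assume "?Q a b c d" then show "?Q a b d c" by (simp add: PS3_def PE_def PT_def algebra_simps)
  next
    fix a b c d :: real
    assume o: "d \<le> c" "c \<le> b" "b \<le> a"
    show "?Q a b c d"
    proof (intro impI)
      assume "0 \<le> d"
      have e: "a = d + (c-d) + (b-c) + (a-b)" "b = d + (c-d) + (b-c)" "c = d + (c-d)" by simp_all
      show "0 \<le> 3 * PS3 a b c d + 3 * PE a b c d - 2 * PT a b c d \<and> 0 \<le> PS3 a b c d + 3 * PE a b c d - PT a b c d"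
        using G2_ord[of d "c-d" "b-c" "a-b"] G4_ord[of d "c-d" "b-c" "a-b"] o \<open>0 \<le> d\<close>
        by (simp del: diff_add_cancel add_diff_cancel_left' add_diff_cancel add.assoc)
    qed
  qed
  then show "0 \<le> 3 * PS3 a b c d + 3 * PE a b c d - 2 * PT a b c d"
    and "0 \<le> PS3 a b c d + 3 * PE a b c d - PT a b c d" using nn by auto
qed

lemma G1_nonneg:
  assumes "0 \<le> a" "0 \<le> b" "0 \<le> c" "0 \<le> (d::real)"
  shows "0 \<le> PT a b c d - 3 * PE a b c d"
proof -
  have "2 * (PT a b c d - 3 * PE a b c d) =
     (a*(b-c)^2 + b*(a-c)^2 + c*(a-b)^2) + (a*(b-d)^2 + b*(a-d)^2 + d*(a-b)^2)
   + (a*(c-d)^2 + c*(a-d)^2 + d*(a-c)^2) + (b*(c-d)^2 + c*(b-d)^2 + d*(b-c)^2)"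
    by (simp add: PT_def PE_def algebra_simps power2_eq_square)
  also have "\<dots> \<ge> 0" using assms by (intro add_nonneg_nonneg mult_nonneg_nonneg) simp_all
  finally show ?thesis by simp
qed

lemma Hs43_repr:
  assumes f: "f \<in> Hs43"
  shows "\<exists>\<alpha> \<beta> \<gamma>. f = symc \<alpha> \<beta> \<gamma>"
proof -
  from f obtain c where c: "\<And>x. f x = (\<Sum>i\<in>UNIV. \<Sum>j\<in>UNIV. \<Sum>k\<in>UNIV. c i j k * x$i * x$j * x$k)"
    unfolding Hs43_def cubic_form4_def by blast
  define q111 where "q111 = c 1 1 1"
  define q222 where "q222 = c 2 2 2"
  define q333 where "q333 = c 3 3 3"
  define q444 where "q444 = c 4 4 4"
  define q112 where "q112 = c 1 1 2 + c 1 2 1 + c 2 1 1"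
  define q113 where "q113 = c 1 1 3 + c 1 3 1 + c 3 1 1"
  define q114 where "q114 = c 1 1 4 + c 1 4 1 + c 4 1 1"
  define q221 where "q221 = c 2 2 1 + c 2 1 2 + c 1 2 2"
  define q223 where "q223 = c 2 2 3 + c 2 3 2 + c 3 2 2"
  define q224 where "q224 = c 2 2 4 + c 2 4 2 + c 4 2 2"
  define q331 where "q331 = c 3 3 1 + c 3 1 3 + c 1 3 3"
  define q332 where "q332 = c 3 3 2 + c 3 2 3 + c 2 3 3"
  define q334 where "q334 = c 3 3 4 + c 3 4 3 + c 4 3 3"
  define q441 where "q441 = c 4 4 1 + c 4 1 4 + c 1 4 4"
  define q442 where "q442 = c 4 4 2 + c 4 2 4 + c 2 4 4"
  define q443 where "q443 = c 4 4 3 + c 4 3 4 + c 3 4 4"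
  define q123 where "q123 = c 1 2 3 + c 1 3 2 + c 2 1 3 + c 2 3 1 + c 3 1 2 + c 3 2 1"
  define q124 where "q124 = c 1 2 4 + c 1 4 2 + c 2 1 4 + c 2 4 1 + c 4 1 2 + c 4 2 1"
  define q134 where "q134 = c 1 3 4 + c 1 4 3 + c 3 1 4 + c 3 4 1 + c 4 1 3 + c 4 3 1"
  define q234 where "q234 = c 2 3 4 + c 2 4 3 + c 3 2 4 + c 3 4 2 + c 4 2 3 + c 4 3 2"
  have P: "\<And>a b cc d. f (vector [a,b,cc,d]) = q111 * a * a * a + q222 * b * b * b + q333 * cc * cc * cc + q444 * d * d * d + q112 * a * a * b + q113 * a * a * cc + q114 * a * a * d + q221 * b * b * a + q223 * b * b * cc + q224 * b * b * d + q331 * cc * cc * a + q332 * cc * cc * b + q334 * cc * cc * d + q441 * d * d * a + q442 * d * d * b + q443 * d * d * cc + q123 * a * b * cc + q124 * a * b * d + q134 * a * cc * d + q234 * b * cc * d"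
    unfolding c q111_def q222_def q333_def q444_def q112_def q113_def q114_def q221_def q223_def q224_def q331_def q332_def q334_def q441_def q442_def q443_def q123_def q124_def q134_def q234_def by (simp add: sum_4 v4 algebra_simps)
  have e_q222: "q222 = q111"
    using sw12[OF f, of 1 0 0 0]
    unfolding P by simp
  have e_q333: "q333 = q111"
    using sw23[OF f, of 0 1 0 0] sw12[OF f, of 1 0 0 0]
    unfolding P by simp
  have e_q444: "q444 = q111"
    using sw34[OF f, of 0 0 1 0] sw23[OF f, of 0 1 0 0] sw12[OF f, of 1 0 0 0]
    unfolding P by simp
  have e_q113: "q113 = q112"
  proof -
    have "f (vector [1,1,0,0]) = f (vector [1,0,1,0])" using sw23[OF f, of 1 1 0 0] by simp
    moreover have "f (vector [1,2,0,0]) = f (vector [1,0,2,0])" using sw23[OF f, of 1 2 0 0] by simp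
    ultimately show ?thesis unfolding P by (simp add: e_q222 e_q333 e_q444; linarith?)
  qed
  have e_q114: "q114 = q112"
  proof -
    have "f (vector [1,1,0,0]) = f (vector [1,0,0,1])" using sw34[OF f, of 1 0 1 0] sw23[OF f, of 1 1 0 0] by simp
    moreover have "f (vector [1,2,0,0]) = f (vector [1,0,0,2])" using sw34[OF f, of 1 0 2 0] sw23[OF f, of 1 2 0 0] by simp
    ultimately show ?thesis unfolding P by (simp add: e_q222 e_q333 e_q444; linarith?)
  qed
  have e_q221: "q221 = q112"
  proof -
    have "f (vector [1,1,0,0]) = f (vector [1,1,0,0])"  by simp
    moreover have "f (vector [1,2,0,0]) = f (vector [2,1,0,0])" using sw12[OF f, of 1 2 0 0] by simp
    ultimately show ?thesis unfolding P by (simp add: e_q222 e_q333 e_q444; linarith?)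
  qed
  have e_q223: "q223 = q112"
  proof -
    have "f (vector [1,1,0,0]) = f (vector [0,1,1,0])" using sw12[OF f, of 1 0 1 0] sw23[OF f, of 1 1 0 0] by simp
    moreover have "f (vector [1,2,0,0]) = f (vector [0,1,2,0])" using sw12[OF f, of 1 0 2 0] sw23[OF f, of 1 2 0 0] by simp
    ultimately show ?thesis unfolding P by (simp add: e_q222 e_q333 e_q444; linarith?)
  qed
  have e_q224: "q224 = q112"
  proof -
    have "f (vector [1,1,0,0]) = f (vector [0,1,0,1])" using sw34[OF f, of 0 1 1 0] sw12[OF f, of 1 0 1 0] sw23[OF f, of 1 1 0 0] by simp
    moreover have "f (vector [1,2,0,0]) = f (vector [0,1,0,2])" using sw34[OF f, of 0 1 2 0] sw12[OF f, of 1 0 2 0] sw23[OF f, of 1 2 0 0] by simp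
    ultimately show ?thesis unfolding P by (simp add: e_q222 e_q333 e_q444; linarith?)
  qed
  have e_q331: "q331 = q112"
  proof -
    have "f (vector [1,1,0,0]) = f (vector [1,0,1,0])" using sw23[OF f, of 1 1 0 0] by simp
    moreover have "f (vector [1,2,0,0]) = f (vector [2,0,1,0])" using sw23[OF f, of 2 1 0 0] sw12[OF f, of 1 2 0 0] by simp
    ultimately show ?thesis unfolding P by (simp add: e_q222 e_q333 e_q444; linarith?)
  qed
  have e_q332: "q332 = q112"
  proof -
    have "f (vector [1,1,0,0]) = f (vector [0,1,1,0])" using sw12[OF f, of 1 0 1 0] sw23[OF f, of 1 1 0 0] by simp
    moreover have "f (vector [1,2,0,0]) = f (vector [0,2,1,0])" using sw12[OF f, of 2 0 1 0] sw23[OF f, of 2 1 0 0] sw12[OF f, of 1 2 0 0] by simp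
    ultimately show ?thesis unfolding P by (simp add: e_q222 e_q333 e_q444; linarith?)
  qed
  have e_q334: "q334 = q112"
  proof -
    have "f (vector [1,1,0,0]) = f (vector [0,0,1,1])" using sw23[OF f, of 0 1 0 1] sw34[OF f, of 0 1 1 0] sw12[OF f, of 1 0 1 0] sw23[OF f, of 1 1 0 0] by simp
    moreover have "f (vector [1,2,0,0]) = f (vector [0,0,1,2])" using sw23[OF f, of 0 1 0 2] sw34[OF f, of 0 1 2 0] sw12[OF f, of 1 0 2 0] sw23[OF f, of 1 2 0 0] by simp
    ultimately show ?thesis unfolding P by (simp add: e_q222 e_q333 e_q444; linarith?)
  qed
  have e_q441: "q441 = q112"
  proof -
    have "f (vector [1,1,0,0]) = f (vector [1,0,0,1])" using sw34[OF f, of 1 0 1 0] sw23[OF f, of 1 1 0 0] by simp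
    moreover have "f (vector [1,2,0,0]) = f (vector [2,0,0,1])" using sw34[OF f, of 2 0 1 0] sw23[OF f, of 2 1 0 0] sw12[OF f, of 1 2 0 0] by simp
    ultimately show ?thesis unfolding P by (simp add: e_q222 e_q333 e_q444; linarith?)
  qed
  have e_q442: "q442 = q112"
  proof -
    have "f (vector [1,1,0,0]) = f (vector [0,1,0,1])" using sw34[OF f, of 0 1 1 0] sw12[OF f, of 1 0 1 0] sw23[OF f, of 1 1 0 0] by simp
    moreover have "f (vector [1,2,0,0]) = f (vector [0,2,0,1])" using sw34[OF f, of 0 2 1 0] sw12[OF f, of 2 0 1 0] sw23[OF f, of 2 1 0 0] sw12[OF f, of 1 2 0 0] by simp
    ultimately show ?thesis unfolding P by (simp add: e_q222 e_q333 e_q444; linarith?)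
  qed
  have e_q443: "q443 = q112"
  proof -
    have "f (vector [1,1,0,0]) = f (vector [0,0,1,1])" using sw23[OF f, of 0 1 0 1] sw34[OF f, of 0 1 1 0] sw12[OF f, of 1 0 1 0] sw23[OF f, of 1 1 0 0] by simp
    moreover have "f (vector [1,2,0,0]) = f (vector [0,0,2,1])" using sw23[OF f, of 0 2 0 1] sw34[OF f, of 0 2 1 0] sw12[OF f, of 2 0 1 0] sw23[OF f, of 2 1 0 0] sw12[OF f, of 1 2 0 0] by simp
    ultimately show ?thesis unfolding P by (simp add: e_q222 e_q333 e_q444; linarith?)
  qed
  have e_q124: "q124 = q123"
  proof -
    have "f (vector [1,1,1,0]) = f (vector [1,1,0,1])" using sw34[OF f, of 1 1 1 0] by simp
    then show ?thesis unfolding P by (simp add: e_q222 e_q333 e_q444 e_q113 e_q114 e_q221 e_q223 e_q224 e_q331 e_q332 e_q334 e_q441 e_q442 e_q443; linarith?)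
  qed
  have e_q134: "q134 = q123"
  proof -
    have "f (vector [1,1,1,0]) = f (vector [1,0,1,1])" using sw23[OF f, of 1 1 0 1] sw34[OF f, of 1 1 1 0] by simp
    then show ?thesis unfolding P by (simp add: e_q222 e_q333 e_q444 e_q113 e_q114 e_q221 e_q223 e_q224 e_q331 e_q332 e_q334 e_q441 e_q442 e_q443; linarith?)
  qed
  have e_q234: "q234 = q123"
  proof -
    have "f (vector [1,1,1,0]) = f (vector [0,1,1,1])" using sw12[OF f, of 1 0 1 1] sw23[OF f, of 1 1 0 1] sw34[OF f, of 1 1 1 0] by simp
    then show ?thesis unfolding P by (simp add: e_q222 e_q333 e_q444 e_q113 e_q114 e_q221 e_q223 e_q224 e_q331 e_q332 e_q334 e_q441 e_q442 e_q443; linarith?)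
  qed
  have "f = symc q111 q112 q123"
  proof
    fix x :: "real^4"
    have "f x = f (vector [x$1,x$2,x$3,x$4])" by (simp flip: vec_is_vector4)
    also have "\<dots> = symc q111 q112 q123 x" unfolding P symc_P PS3_def PT_def PE_def
      by (simp add: e_q222 e_q333 e_q444 e_q113 e_q114 e_q221 e_q223 e_q224 e_q331 e_q332 e_q334 e_q441 e_q442 e_q443 e_q124 e_q134 e_q234 algebra_simps power3_eq_cube power2_eq_square)
    finally show "f x = symc q111 q112 q123 x" .
  qed
  then show ?thesis by blast
qed


lemma symc_Hs43: "symc \<alpha> \<beta> \<gamma> \<in> Hs43"
proof -
  have cub: "cubic_form4 (symc \<alpha> \<beta> \<gamma>)"
    unfolding cubic_form4_def
    apply (rule exI[where x="\<lambda>i j k. if i = j \<and> j = k then \<alpha> else if i = j then \<beta>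
                        else if j \<noteq> k \<and> i \<noteq> k then \<gamma>/6 else 0"])
    apply (simp add: sum_4 symc_P PS3_def PT_def PE_def algebra_simps power2_eq_square power3_eq_cube)
    done
  define p :: "nat \<Rightarrow> real^4 \<Rightarrow> real" where "p k x = (\<Sum>i\<in>UNIV. (x$i)^k)" for k x
  have pe: "symc \<alpha> \<beta> \<gamma> x = \<alpha> * p 3 x + \<beta> * (p 2 x * p 1 x - p 3 x)
       + \<gamma> * (p 1 x ^ 3 - 3 * p 1 x * p 2 x + 2 * p 3 x) / 6" for x
    by (simp add: p_def sum_4 symc_P PS3_def PT_def PE_def algebra_simps power2_eq_square power3_eq_cube)
  have pp: "p k (\<chi> i. x $ \<sigma> i) = p k x" if "\<sigma> permutes (UNIV::4 set)" for k x \<sigma>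
  proof -
    have "p k x = (\<Sum>i\<in>UNIV. ((\<lambda>i. (x$i)^k) \<circ> \<sigma>) i)"
      unfolding p_def by (rule sum.permute[OF that])
    then show ?thesis by (simp add: p_def)
  qed
  show ?thesis unfolding Hs43_def using cub by (simp add: pe pp)
qed

lemma g_symc: "g1 = symc 0 1 (-3)" "g2 = symc 3 (-2) 3" "g3 = symc 0 0 1" "g4 = symc 1 (-1) 3"
  by (auto simp: fun_eq_iff g1_def g2_def g3_def g4_def symc_def)

lemma comb_symc: "(\<lambda>x. l1 * g1 x + l2 * g2 x + l3 * g3 x + l4 * g4 x)
   = symc (3*l2+l4) (l1-2*l2-l4) (-3*l1+3*l2+l3+3*l4)"
  by (simp add: fun_eq_iff g_symc symc_def algebra_simps)

lemma symc_vals: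
  "symc \<alpha> \<beta> \<gamma> (vector [1,0,0,0]) = \<alpha>"
  "symc \<alpha> \<beta> \<gamma> (vector [1,1,0,0]) = 2*\<alpha>+2*\<beta>"
  "symc \<alpha> \<beta> \<gamma> (vector [1,1,1,0]) = 3*\<alpha>+6*\<beta>+\<gamma>"
  "symc \<alpha> \<beta> \<gamma> (vector [1,1,1,1]) = 4*\<alpha>+12*\<beta>+4*\<gamma>"
  by (simp_all add: symc_P v4 PS3_def PT_def PE_def)

lemma comb_vals:
  fixes l1 l2 l3 l4 :: real
  defines "F \<equiv> (\<lambda>x. l1 * g1 x + l2 * g2 x + l3 * g3 x + l4 * g4 x)"
  shows "F (vector [1,0,0,0]) = 3*l2+l4" "F (vector [1,1,0,0]) = 2*l1+2*l2"
        "F (vector [1,1,1,0]) = 3*l1+l3" "F (vector [1,1,1,1]) = 4*l3+4*l4"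
  unfolding F_def comb_symc symc_vals by simp_all

lemma g_vals:
  "g1 (vector [1,0,0,0]) = 0" "g1 (vector [1,1,0,0]) = 2" "g1 (vector [1,1,1,0]) = 3" "g1 (vector [1,1,1,1]) = 0"
  "g2 (vector [1,0,0,0]) = 3" "g2 (vector [1,1,0,0]) = 2" "g2 (vector [1,1,1,0]) = 0" "g2 (vector [1,1,1,1]) = 0"
  "g3 (vector [1,0,0,0]) = 0" "g3 (vector [1,1,0,0]) = 0" "g3 (vector [1,1,1,0]) = 1" "g3 (vector [1,1,1,1]) = 4"
  "g4 (vector [1,0,0,0]) = 1" "g4 (vector [1,1,0,0]) = 0" "g4 (vector [1,1,1,0]) = 0" "g4 (vector [1,1,1,1]) = 4"
  by (simp_all add: g_symc symc_vals)

lemma Ps43_nonneg_pt: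
  assumes "f \<in> Ps43" "0 \<le> a" "0 \<le> b" "0 \<le> c" "0 \<le> d"
  shows "0 \<le> f (vector [a,b,c,d])"
  using assms unfolding Ps43_def by (auto simp: forall_4 v4)

lemma comb_Ps43:
  assumes "0 \<le> l1" "0 \<le> l2" "0 \<le> l3" "0 \<le> l4"
  shows "(\<lambda>x. l1 * g1 x + l2 * g2 x + l3 * g3 x + l4 * g4 x) \<in> Ps43"
proof -
  have nn: "0 \<le> l1 * g1 x + l2 * g2 x + l3 * g3 x + l4 * g4 x" if x: "\<forall>i. 0 \<le> x$i" for x
  proof -
    have n: "0 \<le> x$1" "0 \<le> x$2" "0 \<le> x$3" "0 \<le> x$4" using x by auto
    have "0 \<le> g1 x" using G1_nonneg[OF n] by (simp add: g_symc symc_P)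
    moreover have "0 \<le> g2 x" using G_nonneg(1)[OF n] by (simp add: g_symc symc_P)
    moreover have "0 \<le> g3 x" using n by (simp add: g_symc symc_P PE_def)
    moreover have "0 \<le> g4 x" using G_nonneg(2)[OF n] by (simp add: g_symc symc_P)
    ultimately show ?thesis using assms by (intro add_nonneg_nonneg mult_nonneg_nonneg) auto
  qed
  have "(\<lambda>x. l1 * g1 x + l2 * g2 x + l3 * g3 x + l4 * g4 x) \<in> Hs43"
    unfolding comb_symc by (rule symc_Hs43)
  then show ?thesis unfolding Ps43_def using nn by blast
qed

lemma Ps43_repr:
  assumes f: "f \<in> Ps43"
  shows "\<exists>l1 l2 l3 l4. 0 \<le> l1 \<and> 0 \<le> l2 \<and> 0 \<le> l3 \<and> 0 \<le> l4 \<and>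
           f = (\<lambda>x. l1 * g1 x + l2 * g2 x + l3 * g3 x + l4 * g4 x)"
proof -
  from f have "f \<in> Hs43" unfolding Ps43_def by simp
  then obtain \<alpha> \<beta> \<gamma> where fe: "f = symc \<alpha> \<beta> \<gamma>" using Hs43_repr by blast
  have v1: "0 \<le> \<alpha>" using Ps43_nonneg_pt[OF f, of 1 0 0 0] by (simp add: fe symc_vals)
  have v2: "0 \<le> 2*\<alpha>+2*\<beta>" using Ps43_nonneg_pt[OF f, of 1 1 0 0] by (simp add: fe symc_vals)
  have v3: "0 \<le> 3*\<alpha>+6*\<beta>+\<gamma>" using Ps43_nonneg_pt[OF f, of 1 1 1 0] by (simp add: fe symc_vals)
  have v4': "0 \<le> 4*\<alpha>+12*\<beta>+4*\<gamma>" using Ps43_nonneg_pt[OF f, of 1 1 1 1] by (simp add: fe symc_vals)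
  define t where "t = max 0 (-2*\<alpha> - 3*\<beta>)"
  define l2 where "l2 = \<alpha>/3 - t/3"
  define l1 where "l1 = \<alpha> + \<beta> - l2"
  define l3 where "l3 = \<alpha> + 3*\<beta> + \<gamma> - t"
  have t1: "t \<ge> 0" "t \<ge> -2*\<alpha> - 3*\<beta>" unfolding t_def by auto
  have t2a: "t \<le> \<alpha>" unfolding t_def max.bounded_iff by (rule conjI; insert v1 v2; linarith)
  have t2b: "t \<le> \<alpha> + 3*\<beta> + \<gamma>" unfolding t_def max.bounded_iff by (rule conjI; insert v3 v4'; linarith)
  have "0 \<le> l1" using t1 t2a t2b v2 unfolding l1_def l2_def by linarith
  moreover have "0 \<le> l2" using t1 t2a t2b unfolding l2_def by linarith
  moreover have "0 \<le> l3" using t1 t2a t2b unfolding l3_def by linarith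
  moreover have "0 \<le> t" using t1 by simp
  moreover have "f = (\<lambda>x. l1 * g1 x + l2 * g2 x + l3 * g3 x + t * g4 x)"
    unfolding comb_symc fe
    by (rule arg_cong3[where f=symc]) (simp_all add: l1_def l2_def l3_def algebra_simps)
  ultimately show ?thesis by blast
qed


lemma Ps43_eq: "Ps43 = {(\<lambda>x. l1 * g1 x + l2 * g2 x + l3 * g3 x + l4 * g4 x) | l1 l2 l3 l4.
                 0 \<le> l1 \<and> 0 \<le> l2 \<and> 0 \<le> l3 \<and> 0 \<le> l4}"
  using Ps43_repr comb_Ps43 by blast

lemma ray_of: "0 \<le> t \<Longrightarrow> (\<lambda>x. t * G x) \<in> ray G"
  unfolding ray_def by blast

lemma char_gen:
  assumes f: "f \<in> Ps43"
  shows "f (vector [1,0,0,0]) = 0 \<and> f (vector [1,1,1,1]) = 0 \<longrightarrow> f \<in> ray g1"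
    and "f (vector [1,1,1,0]) = 0 \<and> f (vector [1,1,1,1]) = 0 \<longrightarrow> f \<in> ray g2"
    and "f (vector [1,0,0,0]) = 0 \<and> f (vector [1,1,0,0]) = 0 \<longrightarrow> f \<in> ray g3"
    and "f (vector [1,1,0,0]) = 0 \<and> f (vector [1,1,1,0]) = 0 \<longrightarrow> f \<in> ray g4"
proof -
  obtain l1 l2 l3 l4 where l: "0 \<le> l1" "0 \<le> l2" "0 \<le> l3" "0 \<le> l4"
    and fe: "f = (\<lambda>x. l1 * g1 x + l2 * g2 x + l3 * g3 x + l4 * g4 x)"
    using Ps43_repr[OF f] by blast
  have c1: "f (vector [1,0,0,0]) = 3*l2+l4" by (simp add: fe g_vals)
  have c2: "f (vector [1,1,0,0]) = 2*l1+2*l2" by (simp add: fe g_vals)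
  have c3: "f (vector [1,1,1,0]) = 3*l1+l3" by (simp add: fe g_vals)
  have c4: "f (vector [1,1,1,1]) = 4*l3+4*l4" by (simp add: fe g_vals)
  show "f (vector [1,0,0,0]) = 0 \<and> f (vector [1,1,1,1]) = 0 \<longrightarrow> f \<in> ray g1"
  proof
    assume h: "f (vector [1,0,0,0]) = 0 \<and> f (vector [1,1,1,1]) = 0"
    have z1: "l2 = 0" using h c1 c2 c3 c4 l by linarith
    have z2: "l3 = 0" using h c1 c2 c3 c4 l by linarith
    have z3: "l4 = 0" using h c1 c2 c3 c4 l by linarith
    have "f = (\<lambda>x. l1 * g1 x)" using fe z1 z2 z3 by simp
    then show "f \<in> ray g1" using ray_of[OF l(1)] by simp
  qed
  show "f (vector [1,1,1,0]) = 0 \<and> f (vector [1,1,1,1]) = 0 \<longrightarrow> f \<in> ray g2"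
  proof
    assume h: "f (vector [1,1,1,0]) = 0 \<and> f (vector [1,1,1,1]) = 0"
    have z4: "l1 = 0" using h c1 c2 c3 c4 l by linarith
    have z5: "l3 = 0" using h c1 c2 c3 c4 l by linarith
    have z6: "l4 = 0" using h c1 c2 c3 c4 l by linarith
    have "f = (\<lambda>x. l2 * g2 x)" using fe z4 z5 z6 by simp
    then show "f \<in> ray g2" using ray_of[OF l(2)] by simp
  qed
  show "f (vector [1,0,0,0]) = 0 \<and> f (vector [1,1,0,0]) = 0 \<longrightarrow> f \<in> ray g3"
  proof
    assume h: "f (vector [1,0,0,0]) = 0 \<and> f (vector [1,1,0,0]) = 0"
    have z7: "l1 = 0" using h c1 c2 c3 c4 l by linarith
    have z8: "l2 = 0" using h c1 c2 c3 c4 l by linarith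
    have z9: "l4 = 0" using h c1 c2 c3 c4 l by linarith
    have "f = (\<lambda>x. l3 * g3 x)" using fe z7 z8 z9 by simp
    then show "f \<in> ray g3" using ray_of[OF l(3)] by simp
  qed
  show "f (vector [1,1,0,0]) = 0 \<and> f (vector [1,1,1,0]) = 0 \<longrightarrow> f \<in> ray g4"
  proof
    assume h: "f (vector [1,1,0,0]) = 0 \<and> f (vector [1,1,1,0]) = 0"
    have z10: "l1 = 0" using h c1 c2 c3 c4 l by linarith
    have z11: "l2 = 0" using h c1 c2 c3 c4 l by linarith
    have z12: "l3 = 0" using h c1 c2 c3 c4 l by linarith
    have "f = (\<lambda>x. l4 * g4 x)" using fe z10 z11 z12 by simp
    then show "f \<in> ray g4" using ray_of[OF l(4)] by simp
  qed
qed

lemma Ps43_scale: "f \<in> Ps43 \<Longrightarrow> 0 \<le> t \<Longrightarrow> (\<lambda>x. t * f x) \<in> Ps43"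
proof -
  assume f: "f \<in> Ps43" and t: "0 \<le> t"
  obtain l1 l2 l3 l4 where l: "0 \<le> l1" "0 \<le> l2" "0 \<le> l3" "0 \<le> l4"
    and fe: "f = (\<lambda>x. l1 * g1 x + l2 * g2 x + l3 * g3 x + l4 * g4 x)"
    using Ps43_repr[OF f] by blast
  have "(\<lambda>x. t * f x) = (\<lambda>x. (t*l1) * g1 x + (t*l2) * g2 x + (t*l3) * g3 x + (t*l4) * g4 x)"
    by (simp add: fe fun_eq_iff algebra_simps)
  then show ?thesis using comb_Ps43[of "t*l1" "t*l2" "t*l3" "t*l4"] l t by simp
qed

lemma extremal_generic:
  assumes G: "G \<in> Ps43" and Gp: "G p = 0" "G q = 0" and Gr: "G r \<noteq> 0"
    and p: "p = vector [p1,p2,p3,p4]" "0 \<le> p1" "0 \<le> p2" "0 \<le> p3" "0 \<le> p4"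
    and q: "q = vector [q1,q2,q3,q4]" "0 \<le> q1" "0 \<le> q2" "0 \<le> q3" "0 \<le> q4"
    and ch: "\<forall>f\<in>Ps43. f p = 0 \<and> f q = 0 \<longrightarrow> f \<in> ray G"
    and t: "0 < t"
  shows "extremal_in Ps43 (\<lambda>x. t * G x)"
  unfolding extremal_in_def
proof (intro conjI allI impI)
  show "(\<lambda>x. t * G x) \<in> Ps43" using Ps43_scale[OF G] t by simp
  show "(\<lambda>x. t * G x) \<noteq> (\<lambda>x. 0)"
  proof
    assume "(\<lambda>x. t * G x) = (\<lambda>x. 0)"
    then have "t * G r = 0" by meson
    then show False using t Gr by simp
  qed
  fix g h assume g: "g \<in> Ps43" and h: "h \<in> Ps43" and e: "(\<lambda>x. t * G x) = (\<lambda>x. g x + h x)"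
  have ep: "g p + h p = 0" "g q + h q = 0" using fun_cong[OF e, of p] fun_cong[OF e, of q] Gp by simp_all
  have nn: "0 \<le> g p" "0 \<le> h p" "0 \<le> g q" "0 \<le> h q"
    using Ps43_nonneg_pt[OF g] Ps43_nonneg_pt[OF h] p q by blast+
  have inr: "k \<in> ray (\<lambda>x. t * G x)" if "k \<in> ray G" for k
  proof -
    from that obtain s where s: "0 \<le> s" "k = (\<lambda>x. s * G x)" unfolding ray_def by blast
    have "k = (\<lambda>x. (s/t) * (t * G x))" using s t by (simp add: fun_eq_iff)
    then show ?thesis unfolding ray_def using s t by fastforce
  qed
  show "g \<in> ray (\<lambda>x. t * G x)" using ch g ep nn inr by (metis add_nonneg_eq_0_iff)
  show "h \<in> ray (\<lambda>x. t * G x)" using ch h ep nn inr by (metis add_nonneg_eq_0_iff)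
qed

lemma g_in_Ps43: "g1 \<in> Ps43" "g2 \<in> Ps43" "g3 \<in> Ps43" "g4 \<in> Ps43"
  using comb_Ps43[of 1 0 0 0] comb_Ps43[of 0 1 0 0] comb_Ps43[of 0 0 1 0] comb_Ps43[of 0 0 0 1]
  by simp_all

lemma ext_g:
  assumes t: "0 < t"
  shows "extremal_in Ps43 (\<lambda>x. t * g1 x)" "extremal_in Ps43 (\<lambda>x. t * g2 x)"
        "extremal_in Ps43 (\<lambda>x. t * g3 x)" "extremal_in Ps43 (\<lambda>x. t * g4 x)"
proof -
  have ch1: "\<forall>f\<in>Ps43. f (vector [1,0,0,0]) = 0 \<and> f (vector [1,1,1,1]) = 0 \<longrightarrow> f \<in> ray g1"
    using char_gen(1) by blast
  show "extremal_in Ps43 (\<lambda>x. t * g1 x)"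
    by (rule extremal_generic[of g1 "vector [1,0,0,0]" "vector [1,1,1,1]" "vector [1,1,0,0]" 1 0 0 0 1 1 1 1 t])
       (simp_all add: g_vals g_in_Ps43 t ch1)
  have ch2: "\<forall>f\<in>Ps43. f (vector [1,1,1,0]) = 0 \<and> f (vector [1,1,1,1]) = 0 \<longrightarrow> f \<in> ray g2"
    using char_gen(2) by blast
  show "extremal_in Ps43 (\<lambda>x. t * g2 x)"
    by (rule extremal_generic[of g2 "vector [1,1,1,0]" "vector [1,1,1,1]" "vector [1,1,0,0]" 1 1 1 0 1 1 1 1 t])
       (simp_all add: g_vals g_in_Ps43 t ch2)
  have ch3: "\<forall>f\<in>Ps43. f (vector [1,0,0,0]) = 0 \<and> f (vector [1,1,0,0]) = 0 \<longrightarrow> f \<in> ray g3"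
    using char_gen(3) by blast
  show "extremal_in Ps43 (\<lambda>x. t * g3 x)"
    by (rule extremal_generic[of g3 "vector [1,0,0,0]" "vector [1,1,0,0]" "vector [1,1,1,0]" 1 0 0 0 1 1 0 0 t])
       (simp_all add: g_vals g_in_Ps43 t ch3)
  have ch4: "\<forall>f\<in>Ps43. f (vector [1,1,0,0]) = 0 \<and> f (vector [1,1,1,0]) = 0 \<longrightarrow> f \<in> ray g4"
    using char_gen(4) by blast
  show "extremal_in Ps43 (\<lambda>x. t * g4 x)"
    by (rule extremal_generic[of g4 "vector [1,1,0,0]" "vector [1,1,1,0]" "vector [1,1,1,1]" 1 1 0 0 1 1 1 0 t])
       (simp_all add: g_vals g_in_Ps43 t ch4)
qed


lemma ext_pick:
  assumes ex: "extremal_in Ps43 f" and fe: "f = (\<lambda>x. a * G x + h x)" and a: "0 < a"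
    and G: "G \<in> Ps43" and h: "h \<in> Ps43" and Gr: "G r \<noteq> 0"
  shows "f \<in> ray G"
proof -
  have "(\<lambda>x. a * G x) \<in> Ps43" using Ps43_scale[OF G] a by simp
  with ex h fe have "(\<lambda>x. a * G x) \<in> ray f" unfolding extremal_in_def by blast
  then obtain t where t: "0 \<le> t" "(\<lambda>x. a * G x) = (\<lambda>x. t * f x)" unfolding ray_def by blast
  have "a * G r = t * f r" using fun_cong[OF t(2), of r] by simp
  then have "t \<noteq> 0" using a Gr by auto
  then have tp: "0 < t" using t by simp
  have "f = (\<lambda>x. (a/t) * G x)"
  proof
    fix x show "f x = a / t * G x" using fun_cong[OF t(2), of x] tp by (simp add: field_simps)
  qed
  then show ?thesis unfolding ray_def using a tp by fastforce
qed

lemma ext_sub: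
  assumes ex: "extremal_in Ps43 f"
  shows "\<exists>i\<in>{1..4::nat}. f \<in> ray (gen i)"
proof -
  have f: "f \<in> Ps43" and nz: "f \<noteq> (\<lambda>x. 0)" using ex unfolding extremal_in_def by auto
  obtain l1 l2 l3 l4 where l: "0 \<le> l1" "0 \<le> l2" "0 \<le> l3" "0 \<le> l4"
    and fe: "f = (\<lambda>x. l1 * g1 x + l2 * g2 x + l3 * g3 x + l4 * g4 x)"
    using Ps43_repr[OF f] by blast
  consider "0 < l1" | "0 < l2" | "0 < l3" | "0 < l4" | "l1 = 0 \<and> l2 = 0 \<and> l3 = 0 \<and> l4 = 0"
    using l by linarith
  then show ?thesis
  proof cases
    case 1
    have "f \<in> ray g1"
      by (rule ext_pick[OF ex _ 1 g_in_Ps43(1) comb_Ps43[of 0 l2 l3 l4], where r="vector [1,1,0,0]"])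
         (use l fe in \<open>simp_all add: g_vals fun_eq_iff algebra_simps\<close>)
    then have "f \<in> ray (gen 1)" by (simp add: gen_def)
    then show ?thesis by (intro bexI[where x=1]) auto
  next
    case 2
    have "f \<in> ray g2"
      by (rule ext_pick[OF ex _ 2 g_in_Ps43(2) comb_Ps43[of l1 0 l3 l4], where r="vector [1,1,0,0]"])
         (use l fe in \<open>simp_all add: g_vals fun_eq_iff algebra_simps\<close>)
    then have "f \<in> ray (gen 2)" by (simp add: gen_def)
    then show ?thesis by (intro bexI[where x=2]) auto
  next
    case 3
    have "f \<in> ray g3"
      by (rule ext_pick[OF ex _ 3 g_in_Ps43(3) comb_Ps43[of l1 l2 0 l4], where r="vector [1,1,1,0]"])
         (use l fe in \<open>simp_all add: g_vals fun_eq_iff algebra_simps\<close>)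
    then have "f \<in> ray (gen 3)" by (simp add: gen_def)
    then show ?thesis by (intro bexI[where x=3]) auto
  next
    case 4
    have "f \<in> ray g4"
      by (rule ext_pick[OF ex _ 4 g_in_Ps43(4) comb_Ps43[of l1 l2 l3 0], where r="vector [1,1,1,1]"])
         (use l fe in \<open>simp_all add: g_vals fun_eq_iff algebra_simps\<close>)
    then have "f \<in> ray (gen 4)" by (simp add: gen_def)
    then show ?thesis by (intro bexI[where x=4]) auto
  next
    case 5
    then have "f = (\<lambda>x. 0)" using fe by simp
    with nz show ?thesis by simp
  qed
qed

lemma gen_cases: "i \<in> {1..4::nat} \<Longrightarrow> i = 1 \<or> i = 2 \<or> i = 3 \<or> i = 4" by auto

lemma ext_set: "{f. extremal_in Ps43 f} = (\<Union>i\<in>{1..4}. ray (gen i) - {\<lambda>x. 0})"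
proof
  show "{f. extremal_in Ps43 f} \<subseteq> (\<Union>i\<in>{1..4}. ray (gen i) - {\<lambda>x. 0})"
    using ext_sub unfolding extremal_in_def by blast
next
  show "(\<Union>i\<in>{1..4}. ray (gen i) - {\<lambda>x. 0}) \<subseteq> {f. extremal_in Ps43 f}"
  proof
    fix f assume "f \<in> (\<Union>i\<in>{1..4}. ray (gen i) - {\<lambda>x. 0})"
    then obtain i t where i: "i \<in> {1..4::nat}" and t: "0 \<le> t" and fe: "f = (\<lambda>x. t * gen i x)"
      and nz: "f \<noteq> (\<lambda>x. 0)" unfolding ray_def by blast
    have "t \<noteq> 0" using nz fe by auto
    with t have tp: "0 < t" by simp
    from gen_cases[OF i] show "f \<in> {f. extremal_in Ps43 f}"
      using ext_g[OF tp] fe by (auto simp: gen_def)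
  qed
qed

lemma rays_distinct: "\<forall>i\<in>{1..4::nat}. \<forall>j\<in>{1..4}. i \<noteq> j \<longrightarrow> ray (gen i) \<noteq> ray (gen j)"
proof (intro ballI impI notI)
  fix i j :: nat assume i: "i \<in> {1..4}" and j: "j \<in> {1..4}" and ij: "i \<noteq> j"
    and eq: "ray (gen i) = ray (gen j)"
  have "gen i \<in> ray (gen i)" using ray_of[of 1 "gen i"] by simp
  with eq obtain t where "gen i = (\<lambda>x. t * gen j x)" unfolding ray_def by blast
  then have e: "gen i (vector [1,0,0,0]) = t * gen j (vector [1,0,0,0])"
      "gen i (vector [1,1,0,0]) = t * gen j (vector [1,1,0,0])"
      "gen i (vector [1,1,1,0]) = t * gen j (vector [1,1,1,0])"
      "gen i (vector [1,1,1,1]) = t * gen j (vector [1,1,1,1])" by simp_all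
  from gen_cases[OF i] gen_cases[OF j] ij e show False
    by (auto simp: gen_def g_vals)
qed

lemma uniq3:
  assumes "f \<in> Hs43"
  shows "\<exists>!(a, b, c). f = (\<lambda>x. a * g1 x + b * g2 x + c * g3 x)"
proof -
  obtain \<alpha> \<beta> \<gamma> where fe: "f = symc \<alpha> \<beta> \<gamma>" using Hs43_repr[OF assms] by blast
  have cs: "(\<lambda>x. a * g1 x + b * g2 x + c * g3 x) = symc (3*b) (a-2*b) (-3*a+3*b+c)" for a b c
    using comb_symc[of a b c 0] by simp
  show ?thesis
  proof (rule ex1I[where a="(\<beta> + 2*\<alpha>/3, \<alpha>/3, \<gamma> + 3*\<beta> + \<alpha>)"])
    show "case (\<beta> + 2*\<alpha>/3, \<alpha>/3, \<gamma> + 3*\<beta> + \<alpha>) of (a, b, c) \<Rightarrow> f = (\<lambda>x. a * g1 x + b * g2 x + c * g3 x)"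
      unfolding fe by (simp add: cs)
  next
    fix p assume "case p of (a, b, c) \<Rightarrow> f = (\<lambda>x. a * g1 x + b * g2 x + c * g3 x)"
    then obtain a b c where p: "p = (a,b,c)" and e: "symc \<alpha> \<beta> \<gamma> = symc (3*b) (a-2*b) (-3*a+3*b+c)"
      by (cases p) (auto simp: cs fe)
    have "\<alpha> = 3*b" "2*\<alpha>+2*\<beta> = 2*(3*b)+2*(a-2*b)" "3*\<alpha>+6*\<beta>+\<gamma> = 3*(3*b)+6*(a-2*b)+(-3*a+3*b+c)"
      using fun_cong[OF e, of "vector [1,0,0,0]"] fun_cong[OF e, of "vector [1,1,0,0]"]
            fun_cong[OF e, of "vector [1,1,1,0]"] by (simp_all only: symc_vals)
    then show "p = (\<beta> + 2*\<alpha>/3, \<alpha>/3, \<gamma> + 3*\<beta> + \<alpha>)" unfolding p by auto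
  qed
qed

theorem proposition1p6:
  shows
   \<comment> \<open>three-dimensional: every symmetric cubic is uniquely a combination of g1,g2,g3\<close>
   "(\<forall>f\<in>Hs43. \<exists>!(a, b, c). f = (\<lambda>x. a * g1 x + b * g2 x + c * g3 x))
    \<comment> \<open>polyhedral: the cone is generated by g1..g4\<close>
    \<and> Ps43 = {(\<lambda>x. l1 * g1 x + l2 * g2 x + l3 * g3 x + l4 * g4 x) | l1 l2 l3 l4.
                 0 \<le> l1 \<and> 0 \<le> l2 \<and> 0 \<le> l3 \<and> 0 \<le> l4}
    \<comment> \<open>exactly four extremal rays, generated by g1..g4\<close>
    \<and> {f. extremal_in Ps43 f} = (\<Union>i\<in>{1..4}. ray (gen i) - {\<lambda>x. 0})
    \<and> (\<forall>i\<in>{1..4::nat}. \<forall>j\<in>{1..4}. i \<noteq> j \<longrightarrow> ray (gen i) \<noteq> ray (gen j))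
    \<and> (\<forall>i\<in>{1..4::nat}. extremal_in Ps43 (gen i))
    \<comment> \<open>equality characterizations\<close>
    \<and> (\<forall>f\<in>Ps43. f (vector [1,0,0,0]) = 0 \<and> f (vector [1,1,1,1]) = 0 \<longrightarrow> f \<in> ray g1)
    \<and> (\<forall>f\<in>Ps43. f (vector [1,1,1,0]) = 0 \<and> f (vector [1,1,1,1]) = 0 \<longrightarrow> f \<in> ray g2)
    \<and> (\<forall>f\<in>Ps43. f (vector [1,0,0,0]) = 0 \<and> f (vector [1,1,0,0]) = 0 \<longrightarrow> f \<in> ray g3)
    \<and> (\<forall>f\<in>Ps43. f (vector [1,1,0,0]) = 0 \<and> f (vector [1,1,1,0]) = 0 \<longrightarrow> f \<in> ray g4)"
proof (intro conjI)
  show "\<forall>f\<in>Hs43. \<exists>!(a, b, c). f = (\<lambda>x. a * g1 x + b * g2 x + c * g3 x)" using uniq3 by blast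
  show "Ps43 = {(\<lambda>x. l1 * g1 x + l2 * g2 x + l3 * g3 x + l4 * g4 x) | l1 l2 l3 l4.
                 0 \<le> l1 \<and> 0 \<le> l2 \<and> 0 \<le> l3 \<and> 0 \<le> l4}" by (rule Ps43_eq)
  show "{f. extremal_in Ps43 f} = (\<Union>i\<in>{1..4}. ray (gen i) - {\<lambda>x. 0})" by (rule ext_set)
  show "\<forall>i\<in>{1..4::nat}. \<forall>j\<in>{1..4}. i \<noteq> j \<longrightarrow> ray (gen i) \<noteq> ray (gen j)" by (rule rays_distinct)
  show "\<forall>i\<in>{1..4::nat}. extremal_in Ps43 (gen i)"
  proof
    fix i :: nat assume "i \<in> {1..4}"
    from gen_cases[OF this] show "extremal_in Ps43 (gen i)"
      using ext_g[of 1] by (auto simp: gen_def)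
  qed
qed (use char_gen in blast)+

end
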